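(* Let $\mathcal{C},\mathcal{D}$ be simplicial models with facets $F$ of $\mathcal{C}$ and $G$ of $\mathcal{D}$, and let $\mathcal{M},\mathcal{N}$ be local epistemic models with worlds $w$ of $\mathcal{M}$ and $v$ of $\mathcal{N}$. Then $\mathcal{C},F$ and $\mathcal{D},G$ are bisimilar iff $\mathtt{LEM}(\mathcal{C}),F$ and $\mathtt{LEM}(\mathcal{D}),G$ are bisimilar; and $\mathcal{M},w$ and $\mathcal{N},v$ are bisimilar iff $\mathtt{SC}(\mathcal{M}),F^{\mathcal M}_w$ and $\mathtt{SC}(\mathcal{N}),F^{\mathcal N}_v$ are bisimilar.
   Context: Fix a nonempty finite set $\mathbf{A}$ of agents and a countable set $\mathbf{P}$ of predicate letters. A simplicial model is $\mathcal{C}=(\mathcal{V},C,\chi,\ell)$: $\mathcal{V}\neq\emptyset$; $C\subseteq\wp(\mathcal{V})$ with $\emptyset\notin C$, closed under nonempty subsets, containing all singletons; $\chi:\mathcal{V}\to\mathbf{A}$ injective on every member of $C$; $\ell:\mathbf{P}\to\wp(\mathcal{V})$; facets $\mathcal{F}(C)$ are the inclusion-maximal members of $C$. A first-order Kripke model is $\mathcal{M}=(W,\delta,\{R_a\}_{a\in\mathbf{A}},\rho)$: $W\neq\emptyset$, $\delta:W\to\wp(\mathbf{A})\setminus\{\emptyset\}$, $R_a\subseteq W\times W$ with $R_a(w)=\emptyset$ if $a\notin\delta(w)$, $\rho:\mathbf{P}\times W\to\wp(\mathbf{A})$ with $\rho(p,w)\subseteq\delta(w)$. $\mathcal{M}$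 is a local epistemic model if: for each $a$ the restriction of $R_a$ to $\{w\mid a\in\delta(w)\}$ is an equivalence relation; $wR_av$ and $a\in\delta(w)$ imply $a\in\delta(v)$; $wR_av$ and $a\in\rho(p,w)$ imply $a\in\rho(p,v)$; $v\in\bigcap_{a\in\delta(w)}R_a(w)$ implies $\delta(v)\subseteq\delta(w)$. $\mathtt{LEM}(\mathcal{C})$ has worlds $\mathcal{F}(C)$, $\delta(F)=\chi[F]$, $R_a=\{(F,G)\mid a\in\chi[F\cap G]\}$, $\rho(p,F)=\chi[F\cap\ell(p)]$. For a local epistemic model $\mathcal{M}$, let $[w]_a=R_a(w)$ and $F^{\mathcal M}_w=\{(a,[w]_a)\mid a\in\delta(w)\}$; $\mathtt{SC}(\mathcal{M})$ has vertices $\{(a,[w]_a)\mid w\in W,a\in\delta(w)\}$, faces the nonempty subsets of the sets $F^{\mathcal M}_w$ ($w\in W$), coloring $(a,[w]_a)\mapsto a$, labeling $\ell(p)=\{(a,[w]_a)\mid a\in\rho(p,w)\}$. Bisimulation between simplicial models $\mathcal{C},\mathcal{D}$: $Z\subseteq\mathcal{F}(C^{\mathcal C})\times\mathcal{F}(C^{\mathcal D})$ such that for $(F,G)\in Z$: (Inv) $\chi^{\mathcal C}[F]=\chi^{\mathcal D}[G]$ and $\chi^{\mathcal C}[F\cap\ell^{\mathcal C}(p)]=\chi^{\mathcal D}[G\cap\ell^{\mathcal D}(p)]$ for all $p$; (Zig) for all $A\subseteq\mathbf{A}$ and facets $F'$ with $A\subseteq\chi^{\mathcal C}[F\cap F']$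 there is a facet $G'$ with $A\subseteq\chi^{\mathcal D}[G\cap G']$ and $(F',G')\in Z$; (Zag) symmetric. Bisimulation between Kripke models $\mathcal{M},\mathcal{N}$: $Z\subseteq W^{\mathcal M}\times W^{\mathcal N}$ such that for $(w,v)\in Z$: (Inv) $\delta^{\mathcal M}(w)=\delta^{\mathcal N}(v)$ and $\rho^{\mathcal M}(p,w)=\rho^{\mathcal N}(p,v)$ for all $p$; (Zig) for all $A\subseteq\mathbf{A}$ and $w'\in\bigcap_{a\in A}R^{\mathcal M}_a(w)$ there is $v'\in\bigcap_{a\in A}R^{\mathcal N}_a(v)$ with $(w',v')\in Z$; (Zag) symmetric (the empty intersection is the whole set of worlds). Pointed models are bisimilar if some bisimulation relates the points. *)

theory Defs
  imports Main "HOL-Library.Countable"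
begin

text \<open>Agents are the elements of a finite type 'a (nonempty automatically);
predicate letters form a countable type 'p.\<close>

record ('v, 'a, 'p) smodel =
  verts :: "'v set"
  faces :: "'v set set"
  col   :: "'v \<Rightarrow> 'a"
  lab   :: "'p \<Rightarrow> 'v set"

definition simplicial_model :: "('v, 'a, 'p) smodel \<Rightarrow> bool" where
  "simplicial_model C \<longleftrightarrow>
     verts C \<noteq> {} \<and>
     faces C \<subseteq> Pow (verts C) \<and>
     {} \<notin> faces C \<and>
     (\<forall>X\<in>faces C. \<forall>Y. Y \<subseteq> X \<and> Y \<noteq> {} \<longrightarrow> Y \<in> faces C) \<and>
     (\<forall>x\<in>verts C. {x} \<in> faces C) \<and>
     (\<forall>X\<in>faces C. inj_on (col C) X) \<and>
     (\<forall>p. lab C p \<subseteq> verts C)"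

definition facets :: "('v, 'a, 'p) smodel \<Rightarrow> 'v set set" where
  "facets C = {X \<in> faces C. \<forall>Y\<in>faces C. X \<subseteq> Y \<longrightarrow> Y = X}"

record ('w, 'a, 'p) kmodel =
  worlds :: "'w set"
  dom    :: "'w \<Rightarrow> 'a set"
  rel    :: "'a \<Rightarrow> 'w \<Rightarrow> 'w set"
  val    :: "'p \<Rightarrow> 'w \<Rightarrow> 'a set"

definition kripke_model :: "('w, 'a, 'p) kmodel \<Rightarrow> bool" where
  "kripke_model M \<longleftrightarrow>
     worlds M \<noteq> {} \<and>
     (\<forall>w\<in>worlds M. dom M w \<noteq> {}) \<and>
     (\<forall>a w. rel M a w \<subseteq> worlds M \<and> (w \<notin> worlds M \<longrightarrow> rel M a w = {})) \<and>
     (\<forall>a. \<forall>w\<in>worlds M. a \<notin> dom M w \<longrightarrow> rel M a w = {}) \<and>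
     (\<forall>p. \<forall>w\<in>worlds M. val M p w \<subseteq> dom M w)"

definition local_epistemic :: "('w, 'a, 'p) kmodel \<Rightarrow> bool" where
  "local_epistemic M \<longleftrightarrow>
     kripke_model M \<and>
     (\<forall>a. let D = {w \<in> worlds M. a \<in> dom M w} in
            equiv D ({(w, v). v \<in> rel M a w} \<inter> (D \<times> D))) \<and>
     (\<forall>a w v. v \<in> rel M a w \<and> a \<in> dom M w \<longrightarrow> a \<in> dom M v) \<and>
     (\<forall>a p w v. v \<in> rel M a w \<and> a \<in> val M p w \<longrightarrow> a \<in> val M p v) \<and>
     (\<forall>w\<in>worlds M. \<forall>v\<in>worlds M. (\<forall>a\<in>dom M w. v \<in> rel M a w) \<longrightarrow> dom M v \<subseteq> dom M w)"

definition LEM :: "('v, 'a, 'p) smodel \<Rightarrow> ('v set, 'a, 'p) kmodel" where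
  "LEM C = \<lparr> worlds = facets C,
             dom = (\<lambda>F. col C ` F),
             rel = (\<lambda>a F. {G. F \<in> facets C \<and> G \<in> facets C \<and> a \<in> col C ` (F \<inter> G)}),
             val = (\<lambda>p F. col C ` (F \<inter> lab C p)) \<rparr>"

definition Fw :: "('w, 'a, 'p) kmodel \<Rightarrow> 'w \<Rightarrow> ('a \<times> 'w set) set" where
  "Fw M w = {(a, rel M a w) | a. a \<in> dom M w}"

definition SC :: "('w, 'a, 'p) kmodel \<Rightarrow> ('a \<times> 'w set, 'a, 'p) smodel" where
  "SC M = \<lparr> verts = {(a, rel M a w) | a w. w \<in> worlds M \<and> a \<in> dom M w},
            faces = {X. X \<noteq> {} \<and> (\<exists>w\<in>worlds M. X \<subseteq> Fw M w)},
            col = fst,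
            lab = (\<lambda>p. {(a, rel M a w) | a w. w \<in> worlds M \<and> a \<in> val M p w}) \<rparr>"

definition sbisim :: "('v, 'a, 'p) smodel \<Rightarrow> ('u, 'a, 'p) smodel \<Rightarrow> ('v set \<times> 'u set) set \<Rightarrow> bool" where
  "sbisim C D Z \<longleftrightarrow>
     Z \<subseteq> facets C \<times> facets D \<and>
     (\<forall>(F, G)\<in>Z.
        col C ` F = col D ` G \<and>
        (\<forall>p. col C ` (F \<inter> lab C p) = col D ` (G \<inter> lab D p)) \<and>
        (\<forall>A F'. F' \<in> facets C \<and> A \<subseteq> col C ` (F \<inter> F') \<longrightarrow>
           (\<exists>G'\<in>facets D. A \<subseteq> col D ` (G \<inter> G') \<and> (F', G') \<in> Z)) \<and>
        (\<forall>A G'. G' \<in> facets D \<and> A \<subseteq> col D ` (G \<inter> G') \<longrightarrow>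
           (\<exists>F'\<in>facets C. A \<subseteq> col C ` (F \<inter> F') \<and> (F', G') \<in> Z)))"

definition sbisimilar :: "('v, 'a, 'p) smodel \<Rightarrow> 'v set \<Rightarrow> ('u, 'a, 'p) smodel \<Rightarrow> 'u set \<Rightarrow> bool" where
  "sbisimilar C F D G \<longleftrightarrow> (\<exists>Z. sbisim C D Z \<and> (F, G) \<in> Z)"

definition succs :: "('w, 'a, 'p) kmodel \<Rightarrow> 'a set \<Rightarrow> 'w \<Rightarrow> 'w set" where
  "succs M A w = {w' \<in> worlds M. \<forall>a\<in>A. w' \<in> rel M a w}"

definition kbisim :: "('w, 'a, 'p) kmodel \<Rightarrow> ('x, 'a, 'p) kmodel \<Rightarrow> ('w \<times> 'x) set \<Rightarrow> bool" where
  "kbisim M N Z \<longleftrightarrow>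
     Z \<subseteq> worlds M \<times> worlds N \<and>
     (\<forall>(w, v)\<in>Z.
        dom M w = dom N v \<and>
        (\<forall>p. val M p w = val N p v) \<and>
        (\<forall>A. \<forall>w'\<in>succs M A w. \<exists>v'\<in>succs N A v. (w', v') \<in> Z) \<and>
        (\<forall>A. \<forall>v'\<in>succs N A v. \<exists>w'\<in>succs M A w. (w', v') \<in> Z))"

definition kbisimilar :: "('w, 'a, 'p) kmodel \<Rightarrow> 'w \<Rightarrow> ('x, 'a, 'p) kmodel \<Rightarrow> 'x \<Rightarrow> bool" where
  "kbisimilar M w N v \<longleftrightarrow> (\<exists>Z. kbisim M N Z \<and> (w, v) \<in> Z)"

end

theory Submission
  imports Defs
begin

lemma part1:
  assumes "F \<in> facets C"
  shows "succs (LEM C) A F = {F' \<in> facets C. A \<subseteq> col C ` (F \<inter> F')}"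
  using assms unfolding succs_def LEM_def by auto

lemma zig1:
  assumes "F \<in> facets C" "G \<in> facets D"
  shows "(\<forall>A F'. F' \<in> facets C \<and> A \<subseteq> col C ` (F \<inter> F') \<longrightarrow> (\<exists>G'\<in>facets D. A \<subseteq> col D ` (G \<inter> G') \<and> (F', G') \<in> Z))
     \<longleftrightarrow> (\<forall>A. \<forall>F'\<in>succs (LEM C) A F. \<exists>G'\<in>succs (LEM D) A G. (F', G') \<in> Z)"
  unfolding part1[OF assms(1)] part1[OF assms(2)] by blast

lemma zag1:
  assumes "F \<in> facets C" "G \<in> facets D"
  shows "(\<forall>A G'. G' \<in> facets D \<and> A \<subseteq> col D ` (G \<inter> G') \<longrightarrow> (\<exists>F'\<in>facets C. A \<subseteq> col C ` (F \<inter> F') \<and> (F', G') \<in> Z))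
     \<longleftrightarrow> (\<forall>A. \<forall>G'\<in>succs (LEM D) A G. \<exists>F'\<in>succs (LEM C) A F. (F', G') \<in> Z)"
  unfolding part1[OF assms(1)] part1[OF assms(2)] by blast


lemma body1:
  assumes f: "F \<in> facets C" "G \<in> facets D"
  shows "(col C ` F = col D ` G \<and>
        (\<forall>p. col C ` (F \<inter> lab C p) = col D ` (G \<inter> lab D p)) \<and>
        (\<forall>A F'. F' \<in> facets C \<and> A \<subseteq> col C ` (F \<inter> F') \<longrightarrow> (\<exists>G'\<in>facets D. A \<subseteq> col D ` (G \<inter> G') \<and> (F', G') \<in> Z)) \<and>
        (\<forall>A G'. G' \<in> facets D \<and> A \<subseteq> col D ` (G \<inter> G') \<longrightarrow> (\<exists>F'\<in>facets C. A \<subseteq> col C ` (F \<inter> F') \<and> (F', G') \<in> Z)))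
   \<longleftrightarrow> (col C ` F = col D ` G \<and>
        (\<forall>p. col C ` (F \<inter> lab C p) = col D ` (G \<inter> lab D p)) \<and>
        (\<forall>A. \<forall>w'\<in>succs (LEM C) A F. \<exists>v'\<in>succs (LEM D) A G. (w', v') \<in> Z) \<and>
        (\<forall>A. \<forall>v'\<in>succs (LEM D) A G. \<exists>w'\<in>succs (LEM C) A F. (w', v') \<in> Z))"
  by (simp only: zig1[OF f] zag1[OF f])

lemma part1_iff: "sbisim C D Z \<longleftrightarrow> kbisim (LEM C) (LEM D) Z"
proof -
  have W: "worlds (LEM C) = facets C" "worlds (LEM D) = facets D"
    "\<And>F. dom (LEM C) F = col C ` F" "\<And>G. dom (LEM D) G = col D ` G"
    "\<And>p F. val (LEM C) p F = col C ` (F \<inter> lab C p)" "\<And>p G. val (LEM D) p G = col D ` (G \<inter> lab D p)"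
    by (simp_all add: LEM_def)
  show ?thesis
    unfolding sbisim_def kbisim_def W
    apply (rule conj_cong[OF refl])
    apply (rule ball_cong[OF refl])
    apply (rename_tac FG, case_tac FG)
    apply (simp only: case_prod_conv)
    apply (rule body1)
     apply blast+
    done
qed

lemma le_facts:
  assumes "local_epistemic M"
  shows le_worlds: "\<And>a u w. u \<in> rel M a w \<Longrightarrow> u \<in> worlds M \<and> w \<in> worlds M"
    and le_refl: "\<And>a w. w \<in> worlds M \<Longrightarrow> a \<in> dom M w \<Longrightarrow> w \<in> rel M a w"
    and le_dom: "\<And>a u w. u \<in> rel M a w \<Longrightarrow> a \<in> dom M w"
    and le_dom2: "\<And>a u w. u \<in> rel M a w \<Longrightarrow> a \<in> dom M u"
    and le_sym: "\<And>a u w. u \<in> rel M a w \<Longrightarrow> w \<in> rel M a u"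
    and le_trans: "\<And>a u w t. u \<in> rel M a w \<Longrightarrow> t \<in> rel M a u \<Longrightarrow> t \<in> rel M a w"
    and le_val: "\<And>a p u w. u \<in> rel M a w \<Longrightarrow> a \<in> val M p w \<Longrightarrow> a \<in> val M p u"
    and le_valdom: "\<And>p w. w \<in> worlds M \<Longrightarrow> val M p w \<subseteq> dom M w"
    and le_domne: "\<And>w. w \<in> worlds M \<Longrightarrow> dom M w \<noteq> {}"
    and le_inter: "\<And>w v. w \<in> worlds M \<Longrightarrow> v \<in> worlds M \<Longrightarrow> (\<forall>a\<in>dom M w. v \<in> rel M a w) \<Longrightarrow> dom M v \<subseteq> dom M w"
proof -
  have K: "kripke_model M" and E: "\<And>a. equiv {w \<in> worlds M. a \<in> dom M w}
      ({(w, v). v \<in> rel M a w} \<inter> ({w \<in> worlds M. a \<in> dom M w} \<times> {w \<in> worlds M. a \<in> dom M w}))"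
    and P1: "\<And>a w v. v \<in> rel M a w \<Longrightarrow> a \<in> dom M w \<Longrightarrow> a \<in> dom M v"
    and P2: "\<And>a p w v. v \<in> rel M a w \<Longrightarrow> a \<in> val M p w \<Longrightarrow> a \<in> val M p v"
    and P3: "\<And>w v. w \<in> worlds M \<Longrightarrow> v \<in> worlds M \<Longrightarrow> (\<forall>a\<in>dom M w. v \<in> rel M a w) \<Longrightarrow> dom M v \<subseteq> dom M w"
    using assms unfolding local_epistemic_def Let_def by blast+
  show W: "\<And>a u w. u \<in> rel M a w \<Longrightarrow> u \<in> worlds M \<and> w \<in> worlds M"
    using K unfolding kripke_model_def by blast
  show D: "\<And>a u w. u \<in> rel M a w \<Longrightarrow> a \<in> dom M w"
    using K W unfolding kripke_model_def by blast
  show D2: "\<And>a u w. u \<in> rel M a w \<Longrightarrow> a \<in> dom M u" using D P1 by blast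
  show "\<And>a w. w \<in> worlds M \<Longrightarrow> a \<in> dom M w \<Longrightarrow> w \<in> rel M a w"
    using E unfolding equiv_def refl_on_def by blast
  show "\<And>a u w. u \<in> rel M a w \<Longrightarrow> w \<in> rel M a u"
  proof -
    fix a u w assume "u \<in> rel M a w"
    then have "(w,u) \<in> {(w, v). v \<in> rel M a w} \<inter> ({w \<in> worlds M. a \<in> dom M w} \<times> {w \<in> worlds M. a \<in> dom M w})"
      using W D D2 by blast
    then show "w \<in> rel M a u" using E[of a] unfolding equiv_def sym_def by blast
  qed
  show "\<And>a u w t. u \<in> rel M a w \<Longrightarrow> t \<in> rel M a u \<Longrightarrow> t \<in> rel M a w"
  proof -
    fix a u w t assume "u \<in> rel M a w" "t \<in> rel M a u"
    then have "(w,u) \<in> {(w, v). v \<in> rel M a w} \<inter> ({w \<in> worlds M. a \<in> dom M w} \<times> {w \<in> worlds M. a \<in> dom M w})"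
      "(u,t) \<in> {(w, v). v \<in> rel M a w} \<inter> ({w \<in> worlds M. a \<in> dom M w} \<times> {w \<in> worlds M. a \<in> dom M w})"
      using W D D2 by blast+
    then show "t \<in> rel M a w" using E[of a] unfolding equiv_def trans_def by blast
  qed
  show "\<And>a p u w. u \<in> rel M a w \<Longrightarrow> a \<in> val M p w \<Longrightarrow> a \<in> val M p u" by (rule P2)
  show "\<And>p w. w \<in> worlds M \<Longrightarrow> val M p w \<subseteq> dom M w" using K unfolding kripke_model_def by blast
  show "\<And>w. w \<in> worlds M \<Longrightarrow> dom M w \<noteq> {}" using K unfolding kripke_model_def by blast
  show "\<And>w v. w \<in> worlds M \<Longrightarrow> v \<in> worlds M \<Longrightarrow> (\<forall>a\<in>dom M w. v \<in> rel M a w) \<Longrightarrow> dom M v \<subseteq> dom M w"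
    by (rule P3)
qed

lemma le_classeq:
  assumes "local_epistemic M" "u \<in> rel M a w"
  shows "rel M a u = rel M a w"
  using le_trans[OF assms(1)] le_sym[OF assms(1)] assms(2) by blast

lemma Fw_sub:
  assumes "local_epistemic M" "w \<in> worlds M" "u \<in> worlds M" "Fw M w \<subseteq> Fw M u"
  shows "Fw M w = Fw M u"
proof -
  have 1: "\<forall>a\<in>dom M w. a \<in> dom M u \<and> rel M a w = rel M a u"
    using assms(4) unfolding Fw_def by blast
  have 2: "\<forall>a\<in>dom M w. u \<in> rel M a w"
    using 1 le_refl[OF assms(1) assms(3)] by metis
  have "dom M u \<subseteq> dom M w" using le_inter[OF assms(1) assms(2,3) 2] .
  then have "Fw M u \<subseteq> Fw M w"
    unfolding Fw_def using 1 by blast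
  then show ?thesis using assms(4) by blast
qed

lemma SC_facets:
  assumes "local_epistemic M"
  shows "facets (SC M) = Fw M ` worlds M"
proof
  show "facets (SC M) \<subseteq> Fw M ` worlds M"
  proof
    fix X assume X: "X \<in> facets (SC M)"
    then obtain w where w: "w \<in> worlds M" "X \<subseteq> Fw M w"
      unfolding facets_def SC_def by auto
    have "Fw M w \<noteq> {}" using le_domne[OF assms w(1)] unfolding Fw_def by blast
    then have "Fw M w \<in> faces (SC M)" using w unfolding SC_def by auto
    then have "Fw M w = X" using X w(2) unfolding facets_def by blast
    then show "X \<in> Fw M ` worlds M" using w by blast
  qed
next
  show "Fw M ` worlds M \<subseteq> facets (SC M)"
  proof
    fix X assume "X \<in> Fw M ` worlds M"
    then obtain w where w: "w \<in> worlds M" "X = Fw M w" by blast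
    have "Fw M w \<noteq> {}" using le_domne[OF assms w(1)] unfolding Fw_def by blast
    then have "Fw M w \<in> faces (SC M)" using w unfolding SC_def by auto
    moreover have "\<forall>Y\<in>faces (SC M). Fw M w \<subseteq> Y \<longrightarrow> Y = Fw M w"
    proof (intro ballI impI)
      fix Y assume "Y \<in> faces (SC M)" "Fw M w \<subseteq> Y"
      then obtain u where u: "u \<in> worlds M" "Y \<subseteq> Fw M u" unfolding SC_def by auto
      have "Fw M w = Fw M u" using Fw_sub[OF assms w(1) u(1)] u(2) \<open>Fw M w \<subseteq> Y\<close> by blast
      then show "Y = Fw M w" using u(2) \<open>Fw M w \<subseteq> Y\<close> by blast
    qed
    ultimately show "X \<in> facets (SC M)" using w unfolding facets_def by blast
  qed
qed

lemma SC_col: "col (SC M) ` Fw M w = dom M w"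
  unfolding SC_def Fw_def by force

lemma SC_lab:
  assumes "local_epistemic M" "w \<in> worlds M"
  shows "col (SC M) ` (Fw M w \<inter> lab (SC M) p) = val M p w"
proof
  show "col (SC M) ` (Fw M w \<inter> lab (SC M) p) \<subseteq> val M p w"
  proof
    fix a assume "a \<in> col (SC M) ` (Fw M w \<inter> lab (SC M) p)"
    then obtain u where u: "a \<in> dom M w" "u \<in> worlds M" "a \<in> val M p u" "rel M a u = rel M a w"
      unfolding SC_def Fw_def by auto
    have "a \<in> dom M u" using u le_valdom[OF assms(1)] by blast
    then have "u \<in> rel M a w" using u le_refl[OF assms(1)] by metis
    then have "w \<in> rel M a u" using le_sym[OF assms(1)] by blast
    then show "a \<in> val M p w" using le_val[OF assms(1)] u by blast
  qed
next
  show "val M p w \<subseteq> col (SC M) ` (Fw M w \<inter> lab (SC M) p)"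
  proof
    fix a assume a: "a \<in> val M p w"
    then have "a \<in> dom M w" using le_valdom[OF assms] by blast
    then have "(a, rel M a w) \<in> Fw M w \<inter> lab (SC M) p"
      using a assms(2) unfolding SC_def Fw_def by auto
    then show "a \<in> col (SC M) ` (Fw M w \<inter> lab (SC M) p)" unfolding SC_def by force
  qed
qed

lemma SC_inter:
  assumes "local_epistemic M" "w \<in> worlds M" "u \<in> worlds M"
  shows "A \<subseteq> col (SC M) ` (Fw M w \<inter> Fw M u) \<longleftrightarrow> (\<forall>a\<in>A. u \<in> rel M a w)"
proof
  assume H: "A \<subseteq> col (SC M) ` (Fw M w \<inter> Fw M u)"
  show "\<forall>a\<in>A. u \<in> rel M a w"
  proof
    fix a assume "a \<in> A"
    then have "a \<in> dom M w" "a \<in> dom M u" "rel M a w = rel M a u"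
      using H unfolding SC_def Fw_def by auto
    then show "u \<in> rel M a w" using le_refl[OF assms(1) assms(3)] by metis
  qed
next
  assume H: "\<forall>a\<in>A. u \<in> rel M a w"
  show "A \<subseteq> col (SC M) ` (Fw M w \<inter> Fw M u)"
  proof
    fix a assume "a \<in> A"
    then have r: "u \<in> rel M a w" using H by blast
    have "a \<in> dom M w" "a \<in> dom M u" using le_dom[OF assms(1) r] le_dom2[OF assms(1) r] by auto
    moreover have "rel M a u = rel M a w" using le_classeq[OF assms(1) r] .
    ultimately have "(a, rel M a w) \<in> Fw M w \<inter> Fw M u" unfolding Fw_def by auto
    then show "a \<in> col (SC M) ` (Fw M w \<inter> Fw M u)" unfolding SC_def by force
  qed
qed

lemma SC_succs:
  assumes "local_epistemic M" "w \<in> worlds M"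
  shows "u \<in> succs M A w \<longleftrightarrow> u \<in> worlds M \<and> A \<subseteq> col (SC M) ` (Fw M w \<inter> Fw M u)"
  using SC_inter[OF assms] unfolding succs_def by blast

lemma sbisimD:
  assumes "sbisim C D Z" "(F, G) \<in> Z"
  shows "col C ` F = col D ` G"
    "\<And>p. col C ` (F \<inter> lab C p) = col D ` (G \<inter> lab D p)"
    "\<And>A F'. F' \<in> facets C \<Longrightarrow> A \<subseteq> col C ` (F \<inter> F') \<Longrightarrow>
           (\<exists>G'\<in>facets D. A \<subseteq> col D ` (G \<inter> G') \<and> (F', G') \<in> Z)"
    "\<And>A G'. G' \<in> facets D \<Longrightarrow> A \<subseteq> col D ` (G \<inter> G') \<Longrightarrow>
           (\<exists>F'\<in>facets C. A \<subseteq> col C ` (F \<inter> F') \<and> (F', G') \<in> Z)"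
proof -
  have B: "col C ` F = col D ` G \<and>
        (\<forall>p. col C ` (F \<inter> lab C p) = col D ` (G \<inter> lab D p)) \<and>
        (\<forall>A F'. F' \<in> facets C \<and> A \<subseteq> col C ` (F \<inter> F') \<longrightarrow> (\<exists>G'\<in>facets D. A \<subseteq> col D ` (G \<inter> G') \<and> (F', G') \<in> Z)) \<and>
        (\<forall>A G'. G' \<in> facets D \<and> A \<subseteq> col D ` (G \<inter> G') \<longrightarrow> (\<exists>F'\<in>facets C. A \<subseteq> col C ` (F \<inter> F') \<and> (F', G') \<in> Z))"
    using bspec[OF conjunct2[OF assms(1)[unfolded sbisim_def]] assms(2)] unfolding case_prod_conv .
  note c1 = conjunct1[OF B] and c2 = conjunct1[OF conjunct2[OF B]]
    and c3 = conjunct1[OF conjunct2[OF conjunct2[OF B]]] and c4 = conjunct2[OF conjunct2[OF conjunct2[OF B]]]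
  show "col C ` F = col D ` G" by (rule c1)
  show "\<And>p. col C ` (F \<inter> lab C p) = col D ` (G \<inter> lab D p)" by (rule c2[rule_format])
  show "\<And>A F'. F' \<in> facets C \<Longrightarrow> A \<subseteq> col C ` (F \<inter> F') \<Longrightarrow>
           (\<exists>G'\<in>facets D. A \<subseteq> col D ` (G \<inter> G') \<and> (F', G') \<in> Z)"
    using c3 by (meson conjI)
  show "\<And>A G'. G' \<in> facets D \<Longrightarrow> A \<subseteq> col D ` (G \<inter> G') \<Longrightarrow>
           (\<exists>F'\<in>facets C. A \<subseteq> col C ` (F \<inter> F') \<and> (F', G') \<in> Z)"
    using c4 by (meson conjI)
qed

lemma kbisimD:
  assumes "kbisim M N Z" "(w, v) \<in> Z"
  shows "dom M w = dom N v" "\<And>p. val M p w = val N p v"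
    "\<And>A w'. w' \<in> succs M A w \<Longrightarrow> \<exists>v'\<in>succs N A v. (w', v') \<in> Z"
    "\<And>A v'. v' \<in> succs N A v \<Longrightarrow> \<exists>w'\<in>succs M A w. (w', v') \<in> Z"
proof -
  have B: "dom M w = dom N v \<and> (\<forall>p. val M p w = val N p v) \<and>
    (\<forall>A. \<forall>w'\<in>succs M A w. \<exists>v'\<in>succs N A v. (w', v') \<in> Z) \<and>
    (\<forall>A. \<forall>v'\<in>succs N A v. \<exists>w'\<in>succs M A w. (w', v') \<in> Z)"
    using bspec[OF conjunct2[OF assms(1)[unfolded kbisim_def]] assms(2)] unfolding case_prod_conv .
  note c1 = conjunct1[OF B] and c2 = conjunct1[OF conjunct2[OF B]]
    and c3 = conjunct1[OF conjunct2[OF conjunct2[OF B]]] and c4 = conjunct2[OF conjunct2[OF conjunct2[OF B]]]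
  show "dom M w = dom N v" by (rule c1)
  show "\<And>p. val M p w = val N p v" by (rule c2[rule_format])
  show "\<And>A w'. w' \<in> succs M A w \<Longrightarrow> \<exists>v'\<in>succs N A v. (w', v') \<in> Z"
    by (rule c3[rule_format])
  show "\<And>A v'. v' \<in> succs N A v \<Longrightarrow> \<exists>w'\<in>succs M A w. (w', v') \<in> Z"
    by (rule c4[rule_format])
qed

theorem proposition4:
  fixes C :: "('v, 'a::finite, 'p::countable) smodel"
    and D :: "('u, 'a, 'p) smodel"
    and M :: "('w, 'a, 'p) kmodel"
    and N :: "('x, 'a, 'p) kmodel"
  assumes "simplicial_model C" and "simplicial_model D"
    and "F \<in> facets C" and "G \<in> facets D"
    and "local_epistemic M" and "local_epistemic N"
    and "w \<in> worlds M" and "v \<in> worlds N"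
  shows "(sbisimilar C F D G \<longleftrightarrow> kbisimilar (LEM C) F (LEM D) G) \<and>
         (kbisimilar M w N v \<longleftrightarrow> sbisimilar (SC M) (Fw M w) (SC N) (Fw N v))"
proof
  show "sbisimilar C F D G \<longleftrightarrow> kbisimilar (LEM C) F (LEM D) G"
    unfolding sbisimilar_def kbisimilar_def using part1_iff by blast
next
  note LM = assms(5) and LN = assms(6)
  show "kbisimilar M w N v \<longleftrightarrow> sbisimilar (SC M) (Fw M w) (SC N) (Fw N v)"
  proof
    assume "kbisimilar M w N v"
    then obtain Z where Z: "kbisim M N Z" "(w, v) \<in> Z" unfolding kbisimilar_def by blast
    define Z' where "Z' = {(Fw M x, Fw N y) | x y. (x, y) \<in> Z}"
    have ZW: "Z \<subseteq> worlds M \<times> worlds N" using Z(1) unfolding kbisim_def by blast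
    have "sbisim (SC M) (SC N) Z'"
      unfolding sbisim_def
    proof (intro conjI ballI)
      show "Z' \<subseteq> facets (SC M) \<times> facets (SC N)"
        using ZW SC_facets[OF LM] SC_facets[OF LN] unfolding Z'_def by blast
    next
      fix XY assume "XY \<in> Z'"
      then obtain x y where xy: "XY = (Fw M x, Fw N y)" "(x, y) \<in> Z" unfolding Z'_def by blast
      have x: "x \<in> worlds M" and y: "y \<in> worlds N" using xy ZW by blast+
      note inv = kbisimD(1,2)[OF Z(1) xy(2)] and zig = kbisimD(3)[OF Z(1) xy(2)] and zag = kbisimD(4)[OF Z(1) xy(2)]
      show "case XY of (F, G) \<Rightarrow>
        col (SC M) ` F = col (SC N) ` G \<and>
        (\<forall>p. col (SC M) ` (F \<inter> lab (SC M) p) = col (SC N) ` (G \<inter> lab (SC N) p)) \<and>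
        (\<forall>A F'. F' \<in> facets (SC M) \<and> A \<subseteq> col (SC M) ` (F \<inter> F') \<longrightarrow>
           (\<exists>G'\<in>facets (SC N). A \<subseteq> col (SC N) ` (G \<inter> G') \<and> (F', G') \<in> Z')) \<and>
        (\<forall>A G'. G' \<in> facets (SC N) \<and> A \<subseteq> col (SC N) ` (G \<inter> G') \<longrightarrow>
           (\<exists>F'\<in>facets (SC M). A \<subseteq> col (SC M) ` (F \<inter> F') \<and> (F', G') \<in> Z'))"
        unfolding xy(1) case_prod_conv
      proof (intro conjI allI impI)
        show "col (SC M) ` Fw M x = col (SC N) ` Fw N y" using inv SC_col by metis
      next
        fix p show "col (SC M) ` (Fw M x \<inter> lab (SC M) p) = col (SC N) ` (Fw N y \<inter> lab (SC N) p)"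
          using inv SC_lab[OF LM x] SC_lab[OF LN y] by metis
      next
        fix A F' assume H: "F' \<in> facets (SC M) \<and> A \<subseteq> col (SC M) ` (Fw M x \<inter> F')"
        then obtain x' where x': "x' \<in> worlds M" "F' = Fw M x'" using SC_facets[OF LM] by blast
        have "x' \<in> succs M A x" using SC_succs[OF LM x] H x' by blast
        then obtain y' where y': "y' \<in> succs N A y" "(x', y') \<in> Z" using zig by blast
        have "y' \<in> worlds N" "A \<subseteq> col (SC N) ` (Fw N y \<inter> Fw N y')" using SC_succs[OF LN y] y' by blast+
        then show "\<exists>G'\<in>facets (SC N). A \<subseteq> col (SC N) ` (Fw N y \<inter> G') \<and> (F', G') \<in> Z'"
          using SC_facets[OF LN] x' y' unfolding Z'_def by blast
      next
        fix A G' assume H: "G' \<in> facets (SC N) \<and> A \<subseteq> col (SC N) ` (Fw N y \<inter> G')"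
        then obtain y' where y': "y' \<in> worlds N" "G' = Fw N y'" using SC_facets[OF LN] by blast
        have "y' \<in> succs N A y" using SC_succs[OF LN y] H y' by blast
        then obtain x' where x': "x' \<in> succs M A x" "(x', y') \<in> Z" using zag by blast
        have "x' \<in> worlds M" "A \<subseteq> col (SC M) ` (Fw M x \<inter> Fw M x')" using SC_succs[OF LM x] x' by blast+
        then show "\<exists>F'\<in>facets (SC M). A \<subseteq> col (SC M) ` (Fw M x \<inter> F') \<and> (F', G') \<in> Z'"
          using SC_facets[OF LM] x' y' unfolding Z'_def by blast
      qed
    qed
    moreover have "(Fw M w, Fw N v) \<in> Z'" using Z(2) unfolding Z'_def by blast
    ultimately show "sbisimilar (SC M) (Fw M w) (SC N) (Fw N v)" unfolding sbisimilar_def by blast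
  next
    assume "sbisimilar (SC M) (Fw M w) (SC N) (Fw N v)"
    then obtain Z where Z: "sbisim (SC M) (SC N) Z" "(Fw M w, Fw N v) \<in> Z" unfolding sbisimilar_def by blast
    define Z' where "Z' = {(x, y). x \<in> worlds M \<and> y \<in> worlds N \<and> (Fw M x, Fw N y) \<in> Z}"
    have "kbisim M N Z'"
      unfolding kbisim_def
    proof (intro conjI ballI)
      show "Z' \<subseteq> worlds M \<times> worlds N" unfolding Z'_def by blast
    next
      fix xy assume "xy \<in> Z'"
      then obtain x y where xy: "xy = (x, y)" "x \<in> worlds M" "y \<in> worlds N" "(Fw M x, Fw N y) \<in> Z"
        unfolding Z'_def by blast
      note inv = sbisimD(1,2)[OF Z(1) xy(4)] and zig = sbisimD(3)[OF Z(1) xy(4)] and zag = sbisimD(4)[OF Z(1) xy(4)]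
      show "case xy of (w, v) \<Rightarrow>
        dom M w = dom N v \<and>
        (\<forall>p. val M p w = val N p v) \<and>
        (\<forall>A. \<forall>w'\<in>succs M A w. \<exists>v'\<in>succs N A v. (w', v') \<in> Z') \<and>
        (\<forall>A. \<forall>v'\<in>succs N A v. \<exists>w'\<in>succs M A w. (w', v') \<in> Z')"
        unfolding xy(1) case_prod_conv
      proof (intro conjI allI ballI)
        show "dom M x = dom N y" using inv(1) SC_col by metis
      next
        fix p show "val M p x = val N p y"
          using inv(2)[of p] SC_lab[OF LM xy(2)] SC_lab[OF LN xy(3)] by metis
      next
        fix A x' assume H: "x' \<in> succs M A x"
        then have x': "x' \<in> worlds M" "A \<subseteq> col (SC M) ` (Fw M x \<inter> Fw M x')"
          using SC_succs[OF LM xy(2)] by blast+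
        have "Fw M x' \<in> facets (SC M)" using SC_facets[OF LM] x' by blast
        then obtain G' where G': "G' \<in> facets (SC N)" "A \<subseteq> col (SC N) ` (Fw N y \<inter> G')" "(Fw M x', G') \<in> Z"
          using zig x' by blast
        then obtain y' where y': "y' \<in> worlds N" "G' = Fw N y'" using SC_facets[OF LN] by blast
        have "y' \<in> succs N A y" using SC_succs[OF LN xy(3)] G' y' by blast
        then show "\<exists>y'\<in>succs N A y. (x', y') \<in> Z'" using x' y' G' unfolding Z'_def by blast
      next
        fix A y' assume H: "y' \<in> succs N A y"
        then have y': "y' \<in> worlds N" "A \<subseteq> col (SC N) ` (Fw N y \<inter> Fw N y')"
          using SC_succs[OF LN xy(3)] by blast+
        have "Fw N y' \<in> facets (SC N)" using SC_facets[OF LN] y' by blast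
        then obtain F' where F': "F' \<in> facets (SC M)" "A \<subseteq> col (SC M) ` (Fw M x \<inter> F')" "(F', Fw N y') \<in> Z"
          using zag y' by blast
        then obtain x' where x': "x' \<in> worlds M" "F' = Fw M x'" using SC_facets[OF LM] by blast
        have "x' \<in> succs M A x" using SC_succs[OF LM xy(2)] F' x' by blast
        then show "\<exists>x'\<in>succs M A x. (x', y') \<in> Z'" using x' y' F' unfolding Z'_def by blast
      qed
    qed
    moreover have "(w, v) \<in> Z'" using Z(2) assms(7,8) unfolding Z'_def by blast
    ultimately show "kbisimilar M w N v" unfolding kbisimilar_def by blast
  qed
qed

end
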